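(* Let $n\geq 2$, let $\mathbf{K},\mathbf{L}\in\mathbb{R}^{n\times n}$ be skew-symmetric matrices and let $S_1,S_2:\mathbb{R}^n\to\mathbb{R}$ be smooth functions. Consider the stochastic Runge-Kutta method described in the context (with $r$ stages in time, coefficients $a_{kj},b_k$, and $s$ stages in space, coefficients $\widetilde{a}_{mn},\widetilde{b}_m$), applied with time step $\tau>0$ and space step $h>0$ to $$\mathbf{K}\,{\rm d}_t z+\mathbf{L}z_x\,{\rm d}t=\nabla_z S_1(z)\,{\rm d}t+\nabla_z S_2(z)\circ {\rm d}W(t).$$ Assume that $$b_kb_j-b_ka_{kj}-b_ja_{jk}=0\quad\text{and}\quad \widetilde{b}_m\widetilde{b}_n-\widetilde{b}_m\widetilde{a}_{mn}-\widetilde{b}_n\widetilde{a}_{nm}=0$$ for all $k,j=1,\dots,r$ and all $m,n=1,\dots,s$. Then on every space-time cell (for all $p=0,1,\dots,P$ and $i=0,1,\dots,I$) the method satisfies, almost surely, the discrete stochastic multi-symplectic conservation law $$\frac{\omega^{p+1}-\omega^{p}}{\tau}+\frac{\kappa_{i+1}-\kappa_{i}}{h}=0,$$ where $$\omega^p=\frac{1}{2}\sum_{m=1}^s\widetilde{b}_m\,{\rm d}z_{m}^{p}\wedge \mathbf{K}\,{\rm d}z_{m}^{p},\qquad \kappa_{i}=\frac{1}{2}\sum_{k=1}^rb_k\,{\rm d}z_{i}^{k}\wedge \mathbf{L}\,{\rm d}z_{i}^{k},$$ and $\omega^{p+1},\kappa_{i+1}$ are defined analogously with $z_m^{p+1}$,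 $z_{i+1}^k$.
   Context: The equation is understood in the Stratonovich sense; $W$ is a $Q$-Wiener process on $H=L^2(\mathbb{R},\mathbb{R})$ with trace-class covariance $Q$ on a filtered probability space $(\Omega,\mathcal{F},P,\{\mathcal{F}_t\})$, with $Qe_j=\eta_je_j$ for an orthonormal basis $(e_j)$ and independent real Brownian motions $\beta_j$. The stochastic Runge-Kutta method: on a space-time cell $[x_i,x_{i+1}]\times[t_p,t_{p+1}]$ (with $x_{i+1}-x_i=h$, $t_{p+1}-t_p=\tau$) the unknowns are stage values $Z_m^k\in\mathbb{R}^n$ ($m=1,\dots,s$, $k=1,\dots,r$), discrete derivative values $\delta_tZ_m^k,\delta_xZ_m^k\in\mathbb{R}^n$, values $z_m^p,z_m^{p+1}\in\mathbb{R}^n$ (at time levels $t_p,t_{p+1}$ and spatial stage $m$) and $z_i^k,z_{i+1}^k\in\mathbb{R}^n$ (at spatial nodes $x_i,x_{i+1}$ and temporal stage $k$), related by $Z_{m}^{k}=z_{m}^{p}+\tau\sum_{j=1}^{r}a_{kj}\delta_tZ_{m}^{j}$, $z_{m}^{p+1}=z_{m}^{p}+\tau\sum_{k=1}^{r}b_{k}\delta_tZ_{m}^{k}$, $Z_{m}^{k}=z_{i}^{k}+h\sum_{n=1}^{s}\widetilde{a}_{mn}\delta_{x}Z_{n}^{k}$, $z_{i+1}^{k}=z_{i}^{k}+h\sum_{m=1}^{s}\widetilde{b}_{m}\delta_{x}Z_{m}^{k}$, $\tau\mathbf{K}\delta_{t}Z_{m}^{k}+\tau\mathbf{L}\delta_{x}Z_{m}^{k}=\tau\nabla_{z}S_1(Z_{m}^{k})+\nabla_{z}S_2(Z_{m}^{k})\Delta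 W_m^k$, where $\Delta W_m^k=\sum_{j=1}^\infty\sqrt{\eta_j}e_j(x_m)(\beta_j(t^{k+1})-\beta_j(t^{k}))$ is the Wiener increment at the stage point. Here ${\rm d}$ denotes the exterior differential in phase space (variations of the numerical solution with respect to initial data), and for a matrix $\mathbf{M}$, ${\rm d}z\wedge\mathbf{M}{\rm d}z=\sum_{a,b}\mathbf{M}_{ab}\,{\rm d}z_a\wedge{\rm d}z_b$. *)

theory Defs
  imports "HOL-Analysis.Analysis"
begin

fun iter_partial :: "(real^'n \<Rightarrow> real) \<Rightarrow> 'n list \<Rightarrow> real^'n \<Rightarrow> real" where
  "iter_partial f [] = f"
| "iter_partial f (a # as) = (\<lambda>x. frechet_derivative (iter_partial f as) (at x) (axis a 1))"

definition smooth_fun :: "(real^'n \<Rightarrow> real) \<Rightarrow> bool" where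
  "smooth_fun f \<longleftrightarrow> (\<forall>as x. iter_partial f as differentiable (at x))"

definition grad :: "(real^'n \<Rightarrow> real) \<Rightarrow> real^'n \<Rightarrow> real^'n" where
  "grad S x = (\<chi> a. frechet_derivative S (at x) (axis a 1))"

text \<open>The 2-form  dz \<wedge> M dz = \<Sum>_{a,b} M_ab dz_a \<wedge> dz_b  on the phase space 'p of initial data,
  where z is (a component of) the numerical solution viewed as a function of the initial data,
  evaluated at the point \<theta> on the tangent vectors u, v.\<close>
definition wedge_form :: "real^'n^'n \<Rightarrow> ('p::real_normed_vector \<Rightarrow> real^'n) \<Rightarrow> 'p \<Rightarrow> 'p \<Rightarrow> 'p \<Rightarrow> real" where
  "wedge_form M z \<theta> u v =
     (let Dz = frechet_derivative z (at \<theta>) in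
      (\<Sum>a\<in>UNIV. \<Sum>b\<in>UNIV. M $ a $ b * ((Dz u) $ a * (Dz v) $ b - (Dz v) $ a * (Dz u) $ b)))"

end

theory Submission
  imports Defs
begin


lemma line_deriv:
  fixes F :: "real^'n \<Rightarrow> real"
  assumes "\<And>x. F differentiable (at x)"
  shows "((\<lambda>t. F (y + t *\<^sub>R v)) has_derivative (\<lambda>d. d * frechet_derivative F (at (y + t *\<^sub>R v)) v)) (at t)"
proof -
  have d1: "((\<lambda>t. y + t *\<^sub>R v) has_derivative (\<lambda>d. d *\<^sub>R v)) (at t)"
    by (auto intro!: derivative_eq_intros)
  have d2: "(F has_derivative frechet_derivative F (at (y + t *\<^sub>R v))) (at (y + t *\<^sub>R v))"
    using assms frechet_derivative_works by blast
  have "((F \<circ> (\<lambda>t. y + t *\<^sub>R v)) has_derivative (frechet_derivative F (at (y + t *\<^sub>R v)) \<circ> (\<lambda>d. d *\<^sub>R v))) (at t)"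
    by (rule diff_chain_at[OF d1 d2])
  moreover have "bounded_linear (frechet_derivative F (at (y + t *\<^sub>R v)))"
    using d2 has_derivative_bounded_linear by blast
  ultimately show ?thesis
    by (simp add: o_def linear_simps)
qed

lemma mixed_mvt:
  fixes f :: "real^'n \<Rightarrow> real"
  assumes df: "\<And>x. f differentiable (at x)"
    and dg: "\<And>x. (\<lambda>y. frechet_derivative f (at y) v) differentiable (at x)"
    and h: "h > 0"
  shows "\<exists>\<xi> \<eta>. 0 < \<xi> \<and> \<xi> < h \<and> 0 < \<eta> \<and> \<eta> < h \<and>
     f (x + h *\<^sub>R v + h *\<^sub>R w) - f (x + h *\<^sub>R v) - f (x + h *\<^sub>R w) + f x
       = h * h * frechet_derivative (\<lambda>y. frechet_derivative f (at y) v) (at (x + \<xi> *\<^sub>R v + \<eta> *\<^sub>R w)) w"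
proof -
  define g where "g = (\<lambda>y. frechet_derivative f (at y) v)"
  define u where "u = (\<lambda>s. f (x + h *\<^sub>R w + s *\<^sub>R v) - f (x + s *\<^sub>R v))"
  have du: "(u has_derivative (\<lambda>d. d * (g (x + h *\<^sub>R w + s *\<^sub>R v) - g (x + s *\<^sub>R v)))) (at s)" for s
  proof -
    have "(u has_derivative (\<lambda>d. d * g (x + h *\<^sub>R w + s *\<^sub>R v) - d * g (x + s *\<^sub>R v))) (at s)"
      unfolding u_def g_def
      by (intro has_derivative_diff line_deriv df)
    then show ?thesis by (simp add: right_diff_distrib)
  qed
  obtain \<xi> where xi: "\<xi> \<in> {0<..<h}" "u h - u 0 = h * (g (x + h *\<^sub>R w + \<xi> *\<^sub>R v) - g (x + \<xi> *\<^sub>R v))"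
  proof -
    have "\<exists>s\<in>{0<..<h}. u h - u 0 = (\<lambda>s d. d * (g (x + h *\<^sub>R w + s *\<^sub>R v) - g (x + s *\<^sub>R v))) s (h - 0)"
      by (rule mvt_simple[OF h]) (rule has_derivative_at_withinI[OF du])
    then show ?thesis using that by (auto simp: mult.commute)
  qed
  define G where "G = (\<lambda>t. g (x + \<xi> *\<^sub>R v + t *\<^sub>R w))"
  have dG: "(G has_derivative (\<lambda>d. d * frechet_derivative g (at (x + \<xi> *\<^sub>R v + t *\<^sub>R w)) w)) (at t)" for t
    unfolding G_def by (rule line_deriv) (use dg g_def in auto)
  obtain \<eta> where eta: "\<eta> \<in> {0<..<h}" "G h - G 0 = h * frechet_derivative g (at (x + \<xi> *\<^sub>R v + \<eta> *\<^sub>R w)) w"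
  proof -
    have "\<exists>t\<in>{0<..<h}. G h - G 0 = (\<lambda>t d. d * frechet_derivative g (at (x + \<xi> *\<^sub>R v + t *\<^sub>R w)) w) t (h - 0)"
      by (rule mvt_simple[OF h]) (rule has_derivative_at_withinI[OF dG])
    then show ?thesis using that by (auto simp: mult.commute)
  qed
  have "f (x + h *\<^sub>R v + h *\<^sub>R w) - f (x + h *\<^sub>R v) - f (x + h *\<^sub>R w) + f x = u h - u 0"
    unfolding u_def by (simp add: algebra_simps)
  also have "\<dots> = h * (G h - G 0)"
    using xi unfolding G_def by (simp add: algebra_simps)
  finally show ?thesis using xi eta unfolding g_def by auto
qed

lemma smooth_diff:
  assumes "smooth_fun f" shows "iter_partial f as differentiable (at x)"
  using assms unfolding smooth_fun_def by blast

lemma smooth_cont: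
  assumes "smooth_fun f" shows "continuous (at x) (iter_partial f as)"
  using smooth_diff[OF assms] differentiable_imp_continuous_within by blast

lemma norm_two_axis:
  fixes \<xi> \<eta> :: real
  assumes "0 < \<xi>" "\<xi> < h" "0 < \<eta>" "\<eta> < h"
  shows "dist (x + \<xi> *\<^sub>R axis a 1 + \<eta> *\<^sub>R axis c (1::real)) (x::real^'n) < 2 * h"
proof -
  have "dist (x + \<xi> *\<^sub>R axis a 1 + \<eta> *\<^sub>R axis c (1::real)) x = norm (\<xi> *\<^sub>R axis a 1 + \<eta> *\<^sub>R axis c (1::real))"
    by (simp add: dist_norm)
  also have "\<dots> \<le> norm (\<xi> *\<^sub>R axis a (1::real)) + norm (\<eta> *\<^sub>R axis c (1::real))"
    by (rule norm_triangle_ineq)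
  also have "\<dots> = \<xi> + \<eta>" using assms by simp
  finally show ?thesis using assms by linarith
qed

lemma abs_aux: "\<bar>A - X\<bar> < \<bar>X - Y\<bar> / 2 \<Longrightarrow> \<bar>B - Y\<bar> < \<bar>X - Y\<bar> / 2 \<Longrightarrow> A = (B::real) \<Longrightarrow> False"
  by (cases "X \<le> Y") (auto simp: abs_if split: if_splits)

lemma clairaut:
  fixes f :: "real^'n \<Rightarrow> real"
  assumes sm: "smooth_fun f"
  shows "iter_partial f [c,a] x = iter_partial f [a,c] x"
proof (rule ccontr)
  assume ne: "iter_partial f [c,a] x \<noteq> iter_partial f [a,c] x"
  define P where "P = iter_partial f [c,a]"
  define Q where "Q = iter_partial f [a,c]"
  define e where "e = \<bar>P x - Q x\<bar> / 2"
  have e: "e > 0" using ne unfolding e_def P_def Q_def by simp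
  obtain d1 where d1: "d1 > 0" "\<And>y. dist y x < d1 \<Longrightarrow> dist (P y) (P x) < e"
    using smooth_cont[OF sm, of x "[c,a]"] e unfolding continuous_at_eps_delta P_def by blast
  obtain d2 where d2: "d2 > 0" "\<And>y. dist y x < d2 \<Longrightarrow> dist (Q y) (Q x) < e"
    using smooth_cont[OF sm, of x "[a,c]"] e unfolding continuous_at_eps_delta Q_def by blast
  define h where "h = min d1 d2 / 4"
  have h: "h > 0" using d1 d2 unfolding h_def by simp
  have df: "\<And>x. f differentiable (at x)" using smooth_diff[OF sm, of "[]"] by simp
  have dga: "\<And>x. (\<lambda>y. frechet_derivative f (at y) (axis a 1)) differentiable (at x)"
    using smooth_diff[OF sm, of "[a]"] by simp
  have dgc: "\<And>x. (\<lambda>y. frechet_derivative f (at y) (axis c 1)) differentiable (at x)"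
    using smooth_diff[OF sm, of "[c]"] by simp
  obtain \<xi> \<eta> where 1: "0 < \<xi>" "\<xi> < h" "0 < \<eta>" "\<eta> < h"
    "f (x + h *\<^sub>R axis a 1 + h *\<^sub>R axis c 1) - f (x + h *\<^sub>R axis a 1) - f (x + h *\<^sub>R axis c 1) + f x
       = h * h * P (x + \<xi> *\<^sub>R axis a 1 + \<eta> *\<^sub>R axis c 1)"
    using mixed_mvt[OF df dga h, of x "axis c 1"] unfolding P_def by auto
  obtain \<xi>' \<eta>' where 2: "0 < \<xi>'" "\<xi>' < h" "0 < \<eta>'" "\<eta>' < h"
    "f (x + h *\<^sub>R axis c 1 + h *\<^sub>R axis a 1) - f (x + h *\<^sub>R axis c 1) - f (x + h *\<^sub>R axis a 1) + f x
       = h * h * Q (x + \<xi>' *\<^sub>R axis c 1 + \<eta>' *\<^sub>R axis a 1)"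
    using mixed_mvt[OF df dgc h, of x "axis a 1"] unfolding Q_def by auto
  have "x + h *\<^sub>R axis c 1 + h *\<^sub>R axis a 1 = x + h *\<^sub>R axis a 1 + h *\<^sub>R axis c (1::real)"
    by (simp add: algebra_simps)
  then have "f (x + h *\<^sub>R axis a 1 + h *\<^sub>R axis c 1) - f (x + h *\<^sub>R axis c 1) - f (x + h *\<^sub>R axis a 1) + f x
       = h * h * Q (x + \<xi>' *\<^sub>R axis c 1 + \<eta>' *\<^sub>R axis a 1)"
    using 2(5) by (simp only:)
  then have "h * h * P (x + \<xi> *\<^sub>R axis a 1 + \<eta> *\<^sub>R axis c 1) = h * h * Q (x + \<xi>' *\<^sub>R axis c 1 + \<eta>' *\<^sub>R axis a 1)"
    using 1(5) by linarith
  then have PQ: "P (x + \<xi> *\<^sub>R axis a 1 + \<eta> *\<^sub>R axis c 1) = Q (x + \<xi>' *\<^sub>R axis c 1 + \<eta>' *\<^sub>R axis a 1)"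
    using h by simp
  have "dist (x + \<xi> *\<^sub>R axis a 1 + \<eta> *\<^sub>R axis c 1) x < d1"
    using norm_two_axis[OF 1(1-4), of x a c] h_def d1 d2 by simp
  then have a1: "dist (P (x + \<xi> *\<^sub>R axis a 1 + \<eta> *\<^sub>R axis c 1)) (P x) < e" by (rule d1(2))
  have "dist (x + \<xi>' *\<^sub>R axis c 1 + \<eta>' *\<^sub>R axis a 1) x < d2"
    using norm_two_axis[OF 2(1-4), of x c a] h_def d1 d2 by simp
  then have a2: "dist (Q (x + \<xi>' *\<^sub>R axis c 1 + \<eta>' *\<^sub>R axis a 1)) (Q x) < e" by (rule d2(2))
  show False using a1 a2 PQ unfolding e_def dist_real_def by (rule abs_aux)
qed

definition hess :: "(real^'n \<Rightarrow> real) \<Rightarrow> real^'n \<Rightarrow> real^'n^'n" where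
  "hess S y = (\<chi> a c. iter_partial S [c,a] y)"

lemma lin_exp:
  fixes g :: "real^'n \<Rightarrow> real"
  assumes "linear g"
  shows "g w = (\<Sum>c\<in>UNIV. w$c * g (axis c 1))"
proof -
  have "w = (\<Sum>c\<in>UNIV. w$c *\<^sub>R axis c 1)"
    using basis_expansion[of w] by (simp add: scalar_mult_eq_scaleR)
  then have "g w = g (\<Sum>c\<in>UNIV. w$c *\<^sub>R axis c 1)" by simp
  also have "\<dots> = (\<Sum>c\<in>UNIV. w$c * g (axis c 1))"
    using assms by (simp add: linear_sum linear_scale)
  finally show ?thesis .
qed

lemma hess_sym:
  assumes "smooth_fun S" shows "transpose (hess S y) = hess S y"
  unfolding hess_def transpose_def using clairaut[OF assms] by (simp add: vec_eq_iff)

lemma grad_deriv: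
  fixes S :: "real^'n \<Rightarrow> real"
  assumes sm: "smooth_fun S"
  shows "(grad S has_derivative (\<lambda>w. hess S y *v w)) (at y)"
proof -
  have "((\<lambda>x. grad S x \<bullet> i) has_derivative (\<lambda>w. (hess S y *v w) \<bullet> i)) (at y)" if i: "i \<in> Basis" for i
  proof -
    obtain a where ia: "i = axis a 1" using i by (auto simp: Basis_vec_def)
    have g: "(\<lambda>x. grad S x \<bullet> i) = iter_partial S [a]"
      by (rule ext) (simp add: ia grad_def inner_axis)
    define D where "D = frechet_derivative (iter_partial S [a]) (at y)"
    have dD: "(iter_partial S [a] has_derivative D) (at y)"
      unfolding D_def using smooth_diff[OF sm] frechet_derivative_works by blast
    have lin: "linear D" using dD has_derivative_linear by blast
    have "D w = (hess S y *v w) \<bullet> i" for w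
      unfolding lin_exp[OF lin, of w] ia
      by (simp add: inner_axis hess_def matrix_vector_mult_def D_def mult.commute)
    then have "D = (\<lambda>w. (hess S y *v w) \<bullet> i)" by auto
    then show ?thesis using dD g by simp
  qed
  then show ?thesis
    using has_derivative_componentwise_within[of "grad S" "\<lambda>w. hess S y *v w" y UNIV] by simp
qed

definition bil :: "real^'n^'n \<Rightarrow> real^'n \<Rightarrow> real^'n \<Rightarrow> real" where
  "bil M p q = inner p (M *v q)"

lemma bil_simps:
  "bil M (p + p') q = bil M p q + bil M p' q"
  "bil M p (q + q') = bil M p q + bil M p q'"
  "bil M (c *\<^sub>R p) q = c * bil M p q"
  "bil M p (c *\<^sub>R q) = c * bil M p q"
  "bil M (sum f A) q = (\<Sum>i\<in>A. bil M (f i) q)"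
  "bil M p (sum f A) = (\<Sum>i\<in>A. bil M p (f i))"
  unfolding bil_def
  by (simp_all add: inner_add_left inner_add_right matrix_vector_right_distrib
       linear_sum[OF matrix_vector_mul_linear] linear_scale[OF matrix_vector_mul_linear]
       inner_sum_left inner_sum_right)

lemma inner_transp: "inner p (M *v q) = inner q (transpose M *v (p::real^'n))"
proof -
  have "inner p (M *v q) = (\<Sum>i\<in>UNIV. \<Sum>j\<in>UNIV. p$i * M$i$j * q$j)"
    by (simp add: inner_vec_def matrix_vector_mult_def sum_distrib_left mult.assoc)
  also have "\<dots> = (\<Sum>j\<in>UNIV. \<Sum>i\<in>UNIV. p$i * M$i$j * q$j)" by (rule sum.swap)
  also have "\<dots> = inner q (transpose M *v p)"
    by (simp add: inner_vec_def matrix_vector_mult_def transpose_def sum_distrib_left mult_ac)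
  finally show ?thesis .
qed

lemma wedge_bil:
  fixes M :: "real^'n^'n"
  assumes "transpose M = - M"
  shows "wedge_form M z \<theta> u v = 2 * bil M (frechet_derivative z (at \<theta>) u) (frechet_derivative z (at \<theta>) v)"
proof -
  have e: "(\<Sum>a\<in>UNIV. \<Sum>b\<in>UNIV. M$a$b * (p$a*q$b - q$a*p$b)) = inner p (M *v q) - inner q (M *v p)" for p q :: "real^'n"
    by (simp add: inner_vec_def matrix_vector_mult_def sum_distrib_left sum_subtractf algebra_simps)
  have neg: "inner q (M *v p) = - inner p (M *v q)" for p q :: "real^'n"
    using inner_transp[of q M p] assms by (simp add: matrix_vector_mult_def vec_eq_iff sum_negf inner_vec_def)
  show ?thesis unfolding wedge_form_def Let_def e bil_def
    using neg[of "frechet_derivative z (at \<theta>) v" "frechet_derivative z (at \<theta>) u"] by linarith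
qed



lemma rk:
  fixes M :: "real^'n^'n"
  assumes S: "\<And>k j. k < r \<Longrightarrow> j < r \<Longrightarrow> b k * b j - b k * a k j - b j * a j k = 0"
  shows "bil M (P + \<tau> *\<^sub>R (\<Sum>k<r. b k *\<^sub>R U k)) (Q + \<tau> *\<^sub>R (\<Sum>k<r. b k *\<^sub>R V k)) - bil M P Q
       = \<tau> * (\<Sum>k<r. b k * (bil M (U k) (Q + \<tau> *\<^sub>R (\<Sum>j<r. a k j *\<^sub>R V j))
                          + bil M (P + \<tau> *\<^sub>R (\<Sum>j<r. a k j *\<^sub>R U j)) (V k)))"
proof -
  define x where "x k j = bil M (U k) (V j)" for k j
  have L: "bil M (P + \<tau> *\<^sub>R (\<Sum>k<r. b k *\<^sub>R U k)) (Q + \<tau> *\<^sub>R (\<Sum>k<r. b k *\<^sub>R V k))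
     = bil M P Q + \<tau> * (\<Sum>k<r. b k * bil M (U k) Q) + \<tau> * (\<Sum>k<r. b k * bil M P (V k))
       + \<tau> * \<tau> * (\<Sum>k<r. \<Sum>j<r. b k * b j * x k j)"
  proof -
    have L1: "bil M (P + \<tau> *\<^sub>R A) (Q + \<tau> *\<^sub>R B) = bil M P Q + \<tau> * bil M A Q + \<tau> * bil M P B + \<tau> * \<tau> * bil M A B" for A B
      by (simp add: bil_simps algebra_simps)
    have L2: "bil M (\<Sum>k<r. b k *\<^sub>R U k) (\<Sum>j<r. b j *\<^sub>R V j) = (\<Sum>k<r. \<Sum>j<r. b k * b j * x k j)"
      apply (simp add: bil_simps x_def sum_distrib_left mult.assoc)
      apply (subst sum.swap)
      apply (simp add: mult_ac)
      done
    have L3: "bil M (\<Sum>k<r. b k *\<^sub>R U k) Q = (\<Sum>k<r. b k * bil M (U k) Q)"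
      by (simp add: bil_simps)
    have L4: "bil M P (\<Sum>k<r. b k *\<^sub>R V k) = (\<Sum>k<r. b k * bil M P (V k))"
      by (simp add: bil_simps)
    show ?thesis unfolding L1 L2 L3 L4 by (simp add: sum_distrib_left)
  qed
  define A where "A = (\<Sum>k<r. b k * bil M (U k) Q)"
  define B where "B = (\<Sum>k<r. b k * bil M P (V k))"
  define S1 where "S1 = (\<Sum>k<r. \<Sum>j<r. b k * a k j * x k j)"
  define S2 where "S2 = (\<Sum>k<r. \<Sum>j<r. b k * a k j * x j k)"
  define SS where "SS = (\<Sum>k<r. \<Sum>j<r. b k * b j * x k j)"
  have R1: "bil M (U k) (Q + \<tau> *\<^sub>R (\<Sum>j<r. a k j *\<^sub>R V j)) = bil M (U k) Q + \<tau> * (\<Sum>j<r. a k j * x k j)" for k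
    by (simp add: bil_simps x_def)
  have R2: "bil M (P + \<tau> *\<^sub>R (\<Sum>j<r. a k j *\<^sub>R U j)) (V k) = bil M P (V k) + \<tau> * (\<Sum>j<r. a k j * x j k)" for k
    by (simp add: bil_simps x_def)
  have R3: "b k * (bil M (U k) (Q + \<tau> *\<^sub>R (\<Sum>j<r. a k j *\<^sub>R V j))
                          + bil M (P + \<tau> *\<^sub>R (\<Sum>j<r. a k j *\<^sub>R U j)) (V k))
      = b k * bil M (U k) Q + b k * bil M P (V k) + \<tau> * (\<Sum>j<r. b k * a k j * x k j) + \<tau> * (\<Sum>j<r. b k * a k j * x j k)" for k
    unfolding R1 R2 by (simp add: sum_distrib_left algebra_simps)
  have R: "(\<Sum>k<r. b k * (bil M (U k) (Q + \<tau> *\<^sub>R (\<Sum>j<r. a k j *\<^sub>R V j))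
                          + bil M (P + \<tau> *\<^sub>R (\<Sum>j<r. a k j *\<^sub>R U j)) (V k)))
     = A + B + \<tau> * S1 + \<tau> * S2"
    unfolding R3 A_def B_def S1_def S2_def by (simp add: sum.distrib sum_distrib_left)
  have sw: "S2 = (\<Sum>k<r. \<Sum>j<r. b j * a j k * x k j)"
    unfolding S2_def by (rule sum.swap)
  have key: "SS = S1 + (\<Sum>k<r. \<Sum>j<r. b j * a j k * x k j)"
  proof -
    have "SS = (\<Sum>k<r. \<Sum>j<r. b k * a k j * x k j + b j * a j k * x k j)"
      unfolding SS_def
    proof (rule sum.cong[OF refl], rule sum.cong[OF refl])
      fix k j assume "k \<in> {..<r}" "j \<in> {..<r}"
      then have "b k * b j = b k * a k j + b j * a j k" using S by force
      then show "b k * b j * x k j = b k * a k j * x k j + b j * a j k * x k j"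
        by (simp add: distrib_right)
    qed
    then show ?thesis unfolding S1_def by (simp add: sum.distrib)
  qed
  have K: "\<tau> * \<tau> * SS = \<tau> * (\<tau> * S1 + \<tau> * S2)"
    using key sw by (simp add: distrib_left)
  have L': "bil M (P + \<tau> *\<^sub>R (\<Sum>k<r. b k *\<^sub>R U k)) (Q + \<tau> *\<^sub>R (\<Sum>k<r. b k *\<^sub>R V k))
     = bil M P Q + \<tau> * (A + B) + \<tau> * \<tau> * SS"
    using L unfolding A_def B_def SS_def by (simp add: distrib_left)
  show ?thesis unfolding R L' K by (simp add: distrib_left)
qed

lemma deriv_lin:
  fixes F G :: "'p::euclidean_space \<Rightarrow> real^'n"
  assumes eq: "\<And>t. F t = G t + c *\<^sub>R (\<Sum>j\<in>J. e j *\<^sub>R H j t)"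
    and fin: "finite J"
    and dG: "G differentiable (at \<theta>)" and dH: "\<And>j. j \<in> J \<Longrightarrow> H j differentiable (at \<theta>)"
  shows "frechet_derivative F (at \<theta>) w = frechet_derivative G (at \<theta>) w
          + c *\<^sub>R (\<Sum>j\<in>J. e j *\<^sub>R frechet_derivative (H j) (at \<theta>) w)"
proof -
  have Fe: "F = (\<lambda>t. G t + c *\<^sub>R (\<Sum>j\<in>J. e j *\<^sub>R H j t))" using eq by auto
  have "(F has_derivative (\<lambda>w. frechet_derivative G (at \<theta>) w
          + c *\<^sub>R (\<Sum>j\<in>J. e j *\<^sub>R frechet_derivative (H j) (at \<theta>) w))) (at \<theta>)"
    unfolding Fe
    apply (intro has_derivative_add has_derivative_scaleR_right has_derivative_sum)
    using dG dH frechet_derivative_works by blast+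
  then have D: "(\<lambda>w. frechet_derivative G (at \<theta>) w
          + c *\<^sub>R (\<Sum>j\<in>J. e j *\<^sub>R frechet_derivative (H j) (at \<theta>) w)) = frechet_derivative F (at \<theta>)"
    by (rule frechet_derivative_at)
  show ?thesis by (simp add: D[symmetric])
qed

lemma neg_mv: "(- A) *v (x::real^'n) = - (A *v x)"
  by (simp add: matrix_vector_mult_def vec_eq_iff sum_negf)

lemma transpose_add': "transpose (A + B) = transpose A + transpose (B::real^'n^'n)"
  by (simp add: transpose_def vec_eq_iff)

lemma skew_bil:
  assumes "transpose M = - M"
  shows "bil M p q = - inner q (M *v p)"
proof -
  have "bil M p q = inner q (transpose M *v p)" unfolding bil_def by (rule inner_transp)
  also have "\<dots> = inner q ((- M) *v p)" by (simp only: assms)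
  also have "\<dots> = - inner q (M *v p)" by (simp only: neg_mv inner_minus_right)
  finally show ?thesis .
qed

lemma sym_inner:
  assumes "transpose H = H"
  shows "inner p (H *v q) = inner q (H *v (p::real^'n))"
  using inner_transp[of p H q] unfolding assms .

lemma half_aux:
  fixes X Y S t :: real
  assumes "X - Y = t * (2 * S)" "t > 0"
  shows "((1/2) * X - (1/2) * Y) / t = S"
proof -
  have "(1/2) * X - (1/2) * Y = t * S" using assms(1) by (simp add: algebra_simps)
  then show ?thesis using assms(2) by simp
qed

lemma deriv_eq5:
  fixes T X Zf :: "'p::euclidean_space \<Rightarrow> real^'n" and K L :: "real^'n^'n"
  assumes eq: "\<And>t. \<tau> *\<^sub>R (K *v T t) + \<tau> *\<^sub>R (L *v X t) = \<tau> *\<^sub>R grad S1 (Zf t) + c *\<^sub>R grad S2 (Zf t)"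
    and dT: "T differentiable (at \<theta>)" and dX: "X differentiable (at \<theta>)" and dZ: "Zf differentiable (at \<theta>)"
    and sm1: "smooth_fun S1" and sm2: "smooth_fun S2"
  shows "\<tau> *\<^sub>R (K *v frechet_derivative T (at \<theta>) w) + \<tau> *\<^sub>R (L *v frechet_derivative X (at \<theta>) w)
       = \<tau> *\<^sub>R (hess S1 (Zf \<theta>) *v frechet_derivative Zf (at \<theta>) w) + c *\<^sub>R (hess S2 (Zf \<theta>) *v frechet_derivative Zf (at \<theta>) w)"
proof -
  have fe: "(\<lambda>t. \<tau> *\<^sub>R (K *v T t) + \<tau> *\<^sub>R (L *v X t)) = (\<lambda>t. \<tau> *\<^sub>R grad S1 (Zf t) + c *\<^sub>R grad S2 (Zf t))"
    using eq by auto
  have bK: "bounded_linear ((*v) K)" by simp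
  have bL: "bounded_linear ((*v) L)" by simp
  have h1: "((\<lambda>t. \<tau> *\<^sub>R (K *v T t) + \<tau> *\<^sub>R (L *v X t)) has_derivative
      (\<lambda>w. \<tau> *\<^sub>R (K *v frechet_derivative T (at \<theta>) w) + \<tau> *\<^sub>R (L *v frechet_derivative X (at \<theta>) w))) (at \<theta>)"
    apply (intro has_derivative_add has_derivative_scaleR_right)
     apply (rule bounded_linear.has_derivative[OF bK])
     apply (rule frechet_derivative_works[THEN iffD1, OF dT])
    apply (rule bounded_linear.has_derivative[OF bL])
    apply (rule frechet_derivative_works[THEN iffD1, OF dX])
    done
  have dZ': "(Zf has_derivative frechet_derivative Zf (at \<theta>)) (at \<theta>)"
    using dZ frechet_derivative_works by blast
  have h2: "((\<lambda>t. \<tau> *\<^sub>R grad S1 (Zf t) + c *\<^sub>R grad S2 (Zf t)) has_derivative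
      (\<lambda>w. \<tau> *\<^sub>R (hess S1 (Zf \<theta>) *v frechet_derivative Zf (at \<theta>) w) + c *\<^sub>R (hess S2 (Zf \<theta>) *v frechet_derivative Zf (at \<theta>) w))) (at \<theta>)"
    apply (intro has_derivative_add has_derivative_scaleR_right)
     apply (rule has_derivative_compose[OF dZ' grad_deriv[OF sm1]])
    apply (rule has_derivative_compose[OF dZ' grad_deriv[OF sm2]])
    done
  have eqf: "(\<lambda>w. \<tau> *\<^sub>R (K *v frechet_derivative T (at \<theta>) w) + \<tau> *\<^sub>R (L *v frechet_derivative X (at \<theta>) w))
     = (\<lambda>w. \<tau> *\<^sub>R (hess S1 (Zf \<theta>) *v frechet_derivative Zf (at \<theta>) w) + c *\<^sub>R (hess S2 (Zf \<theta>) *v frechet_derivative Zf (at \<theta>) w))"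
    by (rule has_derivative_unique[OF h1[unfolded fe] h2])
  show ?thesis using fun_cong[OF eqf, of w] by simp
qed

theorem mainTheorem1:
  fixes K L :: "real^'n^'n"
    and S1 S2 :: "real^'n \<Rightarrow> real"
    and r s :: nat
    and a :: "nat \<Rightarrow> nat \<Rightarrow> real" and b :: "nat \<Rightarrow> real"
    and aa :: "nat \<Rightarrow> nat \<Rightarrow> real" and bb :: "nat \<Rightarrow> real"
    and \<tau> h :: real
    and dW :: "nat \<Rightarrow> nat \<Rightarrow> real"
    and Z dtZ dxZ :: "nat \<Rightarrow> nat \<Rightarrow> 'p::euclidean_space \<Rightarrow> real^'n"
    and zp zp1 zi zi1 :: "nat \<Rightarrow> 'p \<Rightarrow> real^'n"
  assumes n2: "CARD('n) \<ge> 2"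
    and skewK: "transpose K = - K" and skewL: "transpose L = - L"
    and smooth1: "smooth_fun S1" and smooth2: "smooth_fun S2"
    and tau_pos: "\<tau> > 0" and h_pos: "h > 0"
    and sympl_t: "\<And>k j. k < r \<Longrightarrow> j < r \<Longrightarrow> b k * b j - b k * a k j - b j * a j k = 0"
    and sympl_x: "\<And>m n. m < s \<Longrightarrow> n < s \<Longrightarrow> bb m * bb n - bb m * aa m n - bb n * aa n m = 0"
    and diff_Z: "\<And>m k \<theta>. m < s \<Longrightarrow> k < r \<Longrightarrow>
        Z m k differentiable (at \<theta>) \<and> dtZ m k differentiable (at \<theta>) \<and> dxZ m k differentiable (at \<theta>)"
    and diff_zm: "\<And>m \<theta>. m < s \<Longrightarrow> zp m differentiable (at \<theta>) \<and> zp1 m differentiable (at \<theta>)"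
    and diff_zk: "\<And>k \<theta>. k < r \<Longrightarrow> zi k differentiable (at \<theta>) \<and> zi1 k differentiable (at \<theta>)"
    and eq1: "\<And>m k \<theta>. m < s \<Longrightarrow> k < r \<Longrightarrow>
        Z m k \<theta> = zp m \<theta> + \<tau> *\<^sub>R (\<Sum>j<r. a k j *\<^sub>R dtZ m j \<theta>)"
    and eq2: "\<And>m \<theta>. m < s \<Longrightarrow>
        zp1 m \<theta> = zp m \<theta> + \<tau> *\<^sub>R (\<Sum>k<r. b k *\<^sub>R dtZ m k \<theta>)"
    and eq3: "\<And>m k \<theta>. m < s \<Longrightarrow> k < r \<Longrightarrow>
        Z m k \<theta> = zi k \<theta> + h *\<^sub>R (\<Sum>n<s. aa m n *\<^sub>R dxZ n k \<theta>)"
    and eq4: "\<And>k \<theta>. k < r \<Longrightarrow>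
        zi1 k \<theta> = zi k \<theta> + h *\<^sub>R (\<Sum>m<s. bb m *\<^sub>R dxZ m k \<theta>)"
    and eq5: "\<And>m k \<theta>. m < s \<Longrightarrow> k < r \<Longrightarrow>
        \<tau> *\<^sub>R (K *v dtZ m k \<theta>) + \<tau> *\<^sub>R (L *v dxZ m k \<theta>)
          = \<tau> *\<^sub>R grad S1 (Z m k \<theta>) + dW m k *\<^sub>R grad S2 (Z m k \<theta>)"
  shows "\<forall>\<theta> u v.
     ((1/2) * (\<Sum>m<s. bb m * wedge_form K (zp1 m) \<theta> u v)
        - (1/2) * (\<Sum>m<s. bb m * wedge_form K (zp m) \<theta> u v)) / \<tau>
   + ((1/2) * (\<Sum>k<r. b k * wedge_form L (zi1 k) \<theta> u v)
        - (1/2) * (\<Sum>k<r. b k * wedge_form L (zi k) \<theta> u v)) / h = 0"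
proof (intro allI)
  fix \<theta> :: 'p and u v :: 'p
  define D where "D F w = frechet_derivative F (at \<theta>) w" for F :: "'p \<Rightarrow> real^'n" and w
  have dZ: "D (Z m k) w = D (zp m) w + \<tau> *\<^sub>R (\<Sum>j<r. a k j *\<^sub>R D (dtZ m j) w)" if "m < s" "k < r" for m k w
    unfolding D_def by (rule deriv_lin[where J="{..<r}"]) (use that eq1 diff_zm diff_Z in auto)
  have dZx: "D (Z m k) w = D (zi k) w + h *\<^sub>R (\<Sum>n<s. aa m n *\<^sub>R D (dxZ n k) w)" if "m < s" "k < r" for m k w
    unfolding D_def by (rule deriv_lin[where J="{..<s}"]) (use that eq3 diff_zk diff_Z in auto)
  have dzp1: "D (zp1 m) w = D (zp m) w + \<tau> *\<^sub>R (\<Sum>k<r. b k *\<^sub>R D (dtZ m k) w)" if "m < s" for m w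
    unfolding D_def by (rule deriv_lin[where J="{..<r}"]) (use that eq2 diff_zm diff_Z in auto)
  have dzi1: "D (zi1 k) w = D (zi k) w + h *\<^sub>R (\<Sum>m<s. bb m *\<^sub>R D (dxZ m k) w)" if "k < r" for k w
    unfolding D_def by (rule deriv_lin[where J="{..<s}"]) (use that eq4 diff_zk diff_Z in auto)
  have d5: "\<tau> *\<^sub>R (K *v D (dtZ m k) w) + \<tau> *\<^sub>R (L *v D (dxZ m k) w)
       = \<tau> *\<^sub>R (hess S1 (Z m k \<theta>) *v D (Z m k) w) + dW m k *\<^sub>R (hess S2 (Z m k \<theta>) *v D (Z m k) w)"
    if "m < s" "k < r" for m k w
    unfolding D_def by (rule deriv_eq5) (use that eq5 diff_Z smooth1 smooth2 in auto)
  have wb: "wedge_form M z \<theta> u v = 2 * bil M (D z u) (D z v)" if "transpose M = - M" for M z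
    unfolding D_def by (rule wedge_bil[OF that])
  define E1 where "E1 m k = bil K (D (dtZ m k) u) (D (Z m k) v) + bil K (D (Z m k) u) (D (dtZ m k) v)" for m k
  define E2 where "E2 m k = bil L (D (dxZ m k) u) (D (Z m k) v) + bil L (D (Z m k) u) (D (dxZ m k) v)" for m k
  have time: "wedge_form K (zp1 m) \<theta> u v - wedge_form K (zp m) \<theta> u v = 2 * \<tau> * (\<Sum>k<r. b k * E1 m k)"
    if m: "m < s" for m
  proof -
    have "wedge_form K (zp1 m) \<theta> u v - wedge_form K (zp m) \<theta> u v
        = 2 * (bil K (D (zp1 m) u) (D (zp1 m) v) - bil K (D (zp m) u) (D (zp m) v))"
      unfolding wb[OF skewK] by simp
    also have "\<dots> = 2 * (\<tau> * (\<Sum>k<r. b k * (bil K (D (dtZ m k) u) (D (zp m) v + \<tau> *\<^sub>R (\<Sum>j<r. a k j *\<^sub>R D (dtZ m j) v))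
                          + bil K (D (zp m) u + \<tau> *\<^sub>R (\<Sum>j<r. a k j *\<^sub>R D (dtZ m j) u)) (D (dtZ m k) v))))"
      unfolding dzp1[OF m]
      by (subst rk[where r=r and b=b and a=a and M=K and P="D (zp m) u" and Q="D (zp m) v"
          and U="\<lambda>k. D (dtZ m k) u" and V="\<lambda>k. D (dtZ m k) v" and \<tau>=\<tau>]) (use sympl_t in auto)
    also have "(\<Sum>k<r. b k * (bil K (D (dtZ m k) u) (D (zp m) v + \<tau> *\<^sub>R (\<Sum>j<r. a k j *\<^sub>R D (dtZ m j) v))
                          + bil K (D (zp m) u + \<tau> *\<^sub>R (\<Sum>j<r. a k j *\<^sub>R D (dtZ m j) u)) (D (dtZ m k) v)))
        = (\<Sum>k<r. b k * E1 m k)"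
      by (rule sum.cong[OF refl]) (simp add: E1_def dZ[OF m])
    finally show ?thesis by simp
  qed
  have space: "wedge_form L (zi1 k) \<theta> u v - wedge_form L (zi k) \<theta> u v = 2 * h * (\<Sum>m<s. bb m * E2 m k)"
    if k: "k < r" for k
  proof -
    have "wedge_form L (zi1 k) \<theta> u v - wedge_form L (zi k) \<theta> u v
        = 2 * (bil L (D (zi1 k) u) (D (zi1 k) v) - bil L (D (zi k) u) (D (zi k) v))"
      unfolding wb[OF skewL] by simp
    also have "\<dots> = 2 * (h * (\<Sum>m<s. bb m * (bil L (D (dxZ m k) u) (D (zi k) v + h *\<^sub>R (\<Sum>n<s. aa m n *\<^sub>R D (dxZ n k) v))
                          + bil L (D (zi k) u + h *\<^sub>R (\<Sum>n<s. aa m n *\<^sub>R D (dxZ n k) u)) (D (dxZ m k) v))))"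
      unfolding dzi1[OF k]
      by (subst rk[where r=s and b=bb and a=aa and M=L and P="D (zi k) u" and Q="D (zi k) v"
          and U="\<lambda>m. D (dxZ m k) u" and V="\<lambda>m. D (dxZ m k) v" and \<tau>=h]) (use sympl_x in auto)
    also have "(\<Sum>m<s. bb m * (bil L (D (dxZ m k) u) (D (zi k) v + h *\<^sub>R (\<Sum>n<s. aa m n *\<^sub>R D (dxZ n k) v))
                          + bil L (D (zi k) u + h *\<^sub>R (\<Sum>n<s. aa m n *\<^sub>R D (dxZ n k) u)) (D (dxZ m k) v)))
        = (\<Sum>m<s. bb m * E2 m k)"
      by (rule sum.cong[OF refl]) (simp add: E2_def dZx[OF _ k])
    finally show ?thesis by simp
  qed
  have zero: "E1 m k + E2 m k = 0" if "m < s" "k < r" for m k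
  proof -
    define Zu where "Zu = D (Z m k) u"
    define Zv where "Zv = D (Z m k) v"
    define H where "H = \<tau> *\<^sub>R hess S1 (Z m k \<theta>) + dW m k *\<^sub>R hess S2 (Z m k \<theta>)"
    have Hs: "transpose H = H"
      unfolding H_def transpose_add' transpose_scalar hess_sym[OF smooth1] hess_sym[OF smooth2] ..
    have Hm: "\<tau> *\<^sub>R (K *v D (dtZ m k) w) + \<tau> *\<^sub>R (L *v D (dxZ m k) w) = H *v D (Z m k) w" for w
      unfolding H_def matrix_vector_mult_add_rdistrib scaleR_matrix_vector_assoc[symmetric] by (rule d5[OF that])
    have negK: "bil K p q = - inner q (K *v p)" for p q by (rule skew_bil[OF skewK])
    have negL: "bil L p q = - inner q (L *v p)" for p q by (rule skew_bil[OF skewL])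
    have "\<tau> * (E1 m k + E2 m k)
       = inner Zu (\<tau> *\<^sub>R (K *v D (dtZ m k) v) + \<tau> *\<^sub>R (L *v D (dxZ m k) v))
         - inner Zv (\<tau> *\<^sub>R (K *v D (dtZ m k) u) + \<tau> *\<^sub>R (L *v D (dxZ m k) u))"
      unfolding E1_def E2_def negK[of "D (dtZ m k) u"] negL[of "D (dxZ m k) u"] Zu_def Zv_def
      by (simp add: bil_def inner_add_right algebra_simps)
    also have "\<dots> = inner Zu (H *v Zv) - inner Zv (H *v Zu)"
      unfolding Hm Zu_def Zv_def by simp
    also have "\<dots> = 0" using sym_inner[OF Hs, of Zu Zv] by simp
    finally show ?thesis using tau_pos by simp
  qed
  have part1: "((1/2) * (\<Sum>m<s. bb m * wedge_form K (zp1 m) \<theta> u v)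
        - (1/2) * (\<Sum>m<s. bb m * wedge_form K (zp m) \<theta> u v)) / \<tau> = (\<Sum>m<s. \<Sum>k<r. bb m * b k * E1 m k)"
  proof -
    have "(\<Sum>m<s. bb m * wedge_form K (zp1 m) \<theta> u v) - (\<Sum>m<s. bb m * wedge_form K (zp m) \<theta> u v)
        = (\<Sum>m<s. bb m * (wedge_form K (zp1 m) \<theta> u v - wedge_form K (zp m) \<theta> u v))"
      by (simp add: sum_subtractf right_diff_distrib)
    also have "\<dots> = (\<Sum>m<s. \<tau> * (2 * (\<Sum>k<r. bb m * b k * E1 m k)))"
      by (rule sum.cong[OF refl]) (simp add: time sum_distrib_left mult_ac)
    finally show ?thesis
      by (intro half_aux) (auto simp: tau_pos sum_distrib_left[symmetric])
  qed
  have part2: "((1/2) * (\<Sum>k<r. b k * wedge_form L (zi1 k) \<theta> u v)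
        - (1/2) * (\<Sum>k<r. b k * wedge_form L (zi k) \<theta> u v)) / h = (\<Sum>m<s. \<Sum>k<r. bb m * b k * E2 m k)"
  proof -
    have "(\<Sum>k<r. b k * wedge_form L (zi1 k) \<theta> u v) - (\<Sum>k<r. b k * wedge_form L (zi k) \<theta> u v)
        = (\<Sum>k<r. b k * (wedge_form L (zi1 k) \<theta> u v - wedge_form L (zi k) \<theta> u v))"
      by (simp add: sum_subtractf right_diff_distrib)
    also have "\<dots> = (\<Sum>k<r. h * (2 * (\<Sum>m<s. bb m * b k * E2 m k)))"
      by (rule sum.cong[OF refl]) (simp add: space sum_distrib_left mult_ac)
    also have "\<dots> = h * (2 * (\<Sum>m<s. \<Sum>k<r. bb m * b k * E2 m k))"
      by (simp add: sum_distrib_left[symmetric] sum.swap[of _ "{..<r}" "{..<s}"])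
    finally show ?thesis by (intro half_aux) (auto simp: h_pos)
  qed
  have "(\<Sum>m<s. \<Sum>k<r. bb m * b k * E1 m k) + (\<Sum>m<s. \<Sum>k<r. bb m * b k * E2 m k)
      = (\<Sum>m<s. \<Sum>k<r. bb m * b k * (E1 m k + E2 m k))"
    by (simp add: sum.distrib[symmetric] distrib_left)
  also have "\<dots> = 0" by (intro sum.neutral ballI) (simp add: zero)
  finally show "((1/2) * (\<Sum>m<s. bb m * wedge_form K (zp1 m) \<theta> u v)
        - (1/2) * (\<Sum>m<s. bb m * wedge_form K (zp m) \<theta> u v)) / \<tau>
   + ((1/2) * (\<Sum>k<r. b k * wedge_form L (zi1 k) \<theta> u v)
        - (1/2) * (\<Sum>k<r. b k * wedge_form L (zi k) \<theta> u v)) / h = 0"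
    unfolding part1 part2 .
qed

end
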